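(* Generalised pp-waves with purely axial torsion whose Levi-Civita Ricci curvature $\{Ric\}$ is parallel (i.e. $\{\nabla\}\{Ric\}=0$, where $\{\nabla\}$ is the Levi-Civita covariant derivative and $\{Ric\}$ the Ricci tensor of the Levi-Civita connection) are solutions of the system of Euler–Lagrange equations $\partial S/\partial g=0$, $\partial S/\partial \Gamma=0$ in the Yang–Mills case $q(R)=R^\kappa{}_{\lambda\mu\nu}R^\lambda{}_\kappa{}^{\mu\nu}$.
   Context: Setting: quadratic metric-affine gravity. Spacetime is a connected real 4-manifold $M$ with a Lorentzian metric $g$ and an independent affine connection $\Gamma$ (unknowns: the 10 components $g_{\mu\nu}$ and the 64 coefficients $\Gamma^\lambda{}_{\mu\nu}$). The action is $S=\int q(R)$, with $\int f := \int f\sqrt{|\det g|}\,dx^0dx^1dx^2dx^3$, where $R$ is the curvature of $\Gamma$ and $q$ is an $O(1,3)$-invariant quadratic form on curvature; varying $S$ independently in $g$ and $\Gamma$ gives the system $\partial S/\partial g=0$, $\partial S/\partial \Gamma=0$. Torsion is $T^\lambda{}_{\mu\nu}=\Gamma^\lambda{}_{\mu\nu}-\Gamma^\lambda{}_{\nu\mu}$. A pp-metric is one which in local coordinates $(x^0,x^1,x^2,x^3)$ reads $ds^2=2\,dx^0dx^3-(dx^1)^2-(dx^2)^2+f(x^1,x^2,x^3)(dx^3)^2$; it admits a nonvanishing spinor field $\chi$ parallel with respect to the Levi-Civita connection, with $\chi^a=(1,0)$, the parallel real null vector field $l^\alpha=\sigma^\alpha{}_{a\dot b}\chi^a\bar\chi^{\dot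 b}$, $l^\mu=(1,0,0,0)$, and a complex vector field $m^\mu=(0,1,\mp i,0)$ with $m_\alpha m^\alpha=l_\alpha m^\alpha=0$, $m_\alpha\bar m^\alpha=-2$. The phase is $\varphi(x)=\int l\cdot dx$, which equals $x^3+\mathrm{const}$ in these coordinates. Definition: a generalised pp-wave with purely axial torsion is a metric compatible spacetime ($\nabla g=0$) with pp-metric and torsion $T=*A$, where $A=k(\varphi)\,l$ and $k:\mathbb{R}\to\mathbb{R}$ is an arbitrary real function of the phase; equivalently $T=\mp\frac{i}{2}k(x^3)\,l\wedge m\wedge\bar m$, i.e. $T_{\kappa\mu\nu}=k(\varphi)\,l^\lambda\varepsilon_{\lambda\kappa\mu\nu}$. *)

theory Defs
  imports "HOL-Analysis.Analysis"
begin

type_synonym pt = "real^4"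
type_synonym tensor2 = "pt \<Rightarrow> 4 \<Rightarrow> 4 \<Rightarrow> real"            (* g x a b = g_{ab}(x) *)
type_synonym conn = "pt \<Rightarrow> 4 \<Rightarrow> 4 \<Rightarrow> 4 \<Rightarrow> real"       (* G x l m n = Gamma^l_{mn}(x) *)

definition pd :: "(pt \<Rightarrow> real) \<Rightarrow> 4 \<Rightarrow> pt \<Rightarrow> real" where
  "pd F i x = deriv (\<lambda>t. F (x + t *\<^sub>R axis i 1)) 0"

fun pds :: "(pt \<Rightarrow> real) \<Rightarrow> 4 list \<Rightarrow> pt \<Rightarrow> real" where
  "pds F [] = F"
| "pds F (i # is) = pd (pds F is) i"

definition cinf_on :: "pt set \<Rightarrow> (pt \<Rightarrow> real) \<Rightarrow> bool" where
  "cinf_on U F \<longleftrightarrow>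
     (\<forall>is. continuous_on U (pds F is) \<and>
       (\<forall>i. \<forall>x\<in>U. ((\<lambda>t. pds F is (x + t *\<^sub>R axis i 1)) has_real_derivative pds F (i # is) x) (at 0)))"

definition pp_metric :: "(real \<Rightarrow> real \<Rightarrow> real \<Rightarrow> real) \<Rightarrow> tensor2" where
  "pp_metric f x a b =
     (if (a = 0 \<and> b = 3) \<or> (a = 3 \<and> b = 0) then 1
      else if a = b \<and> (a = 1 \<or> a = 2) then -1
      else if a = 3 \<and> b = 3 then f (x$1) (x$2) (x$3)
      else 0)"

definition gmat :: "tensor2 \<Rightarrow> pt \<Rightarrow> real^4^4" where
  "gmat g x = (\<chi> i j. g x i j)"

definition ginv :: "tensor2 \<Rightarrow> tensor2" where
  "ginv g x a b = matrix_inv (gmat g x) $ a $ b"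

definition vol :: "tensor2 \<Rightarrow> pt \<Rightarrow> real" where
  "vol g x = sqrt \<bar>det (gmat g x)\<bar>"

(* Levi-Civita symbol with eps_{0123} = 1 *)
definition eps :: "4 \<Rightarrow> 4 \<Rightarrow> 4 \<Rightarrow> 4 \<Rightarrow> real" where
  "eps a b c d = of_int (sgn (Rep_bit0 b - Rep_bit0 a) * sgn (Rep_bit0 c - Rep_bit0 a) *
       sgn (Rep_bit0 d - Rep_bit0 a) * sgn (Rep_bit0 c - Rep_bit0 b) *
       sgn (Rep_bit0 d - Rep_bit0 b) * sgn (Rep_bit0 d - Rep_bit0 c))"

definition curv :: "conn \<Rightarrow> pt \<Rightarrow> 4 \<Rightarrow> 4 \<Rightarrow> 4 \<Rightarrow> 4 \<Rightarrow> real" where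
  "curv G x k l m n =
     pd (\<lambda>y. G y k n l) m x - pd (\<lambda>y. G y k m l) n x
     + (\<Sum>e\<in>UNIV. G x k m e * G x e n l - G x k n e * G x e m l)"

definition torsion :: "conn \<Rightarrow> pt \<Rightarrow> 4 \<Rightarrow> 4 \<Rightarrow> 4 \<Rightarrow> real" where
  "torsion G x l m n = G x l m n - G x l n m"

definition ym_density :: "tensor2 \<Rightarrow> conn \<Rightarrow> pt \<Rightarrow> real" where
  "ym_density g G x =
     (\<Sum>k\<in>UNIV. \<Sum>l\<in>UNIV. \<Sum>m\<in>UNIV. \<Sum>n\<in>UNIV. \<Sum>a\<in>UNIV. \<Sum>b\<in>UNIV.
        curv G x k l m n * curv G x l k a b * ginv g x m a * ginv g x n b) * vol g x"

definition ym_action :: "pt set \<Rightarrow> tensor2 \<Rightarrow> conn \<Rightarrow> real" where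
  "ym_action K g G = integral K (ym_density g G)"

definition EL_metric :: "pt set \<Rightarrow> tensor2 \<Rightarrow> conn \<Rightarrow> bool" where
  "EL_metric U g G \<longleftrightarrow>
     (\<forall>h K. compact K \<and> K \<subseteq> U \<and>
        (\<forall>a b. cinf_on UNIV (\<lambda>x. h x a b) \<and> (\<forall>x. h x a b = h x b a) \<and>
               (\<forall>x. x \<notin> K \<longrightarrow> h x a b = 0))
      \<longrightarrow> ((\<lambda>\<epsilon>. ym_action K (\<lambda>x a b. g x a b + \<epsilon> * h x a b) G) has_real_derivative 0) (at 0))"

definition EL_conn :: "pt set \<Rightarrow> tensor2 \<Rightarrow> conn \<Rightarrow> bool" where
  "EL_conn U g G \<longleftrightarrow>
     (\<forall>H K. compact K \<and> K \<subseteq> U \<and>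
        (\<forall>l m n. cinf_on UNIV (\<lambda>x. H x l m n) \<and> (\<forall>x. x \<notin> K \<longrightarrow> H x l m n = 0))
      \<longrightarrow> ((\<lambda>\<epsilon>. ym_action K g (\<lambda>x l m n. G x l m n + \<epsilon> * H x l m n)) has_real_derivative 0) (at 0))"

definition metric_compatible :: "pt set \<Rightarrow> tensor2 \<Rightarrow> conn \<Rightarrow> bool" where
  "metric_compatible U g G \<longleftrightarrow>
     (\<forall>x\<in>U. \<forall>m a b. pd (\<lambda>y. g y a b) m x - (\<Sum>c\<in>UNIV. G x c m a * g x c b)
                        - (\<Sum>c\<in>UNIV. G x c m b * g x a c) = 0)"

definition christoffel :: "tensor2 \<Rightarrow> conn" where
  "christoffel g x l m n = (1/2) * (\<Sum>k\<in>UNIV. ginv g x l k *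
       (pd (\<lambda>y. g y k n) m x + pd (\<lambda>y. g y k m) n x - pd (\<lambda>y. g y m n) k x))"

definition lc_ricci :: "tensor2 \<Rightarrow> pt \<Rightarrow> 4 \<Rightarrow> 4 \<Rightarrow> real" where
  "lc_ricci g x l n = (\<Sum>k\<in>UNIV. curv (christoffel g) x k l k n)"

definition parallel_lc_ricci :: "pt set \<Rightarrow> tensor2 \<Rightarrow> bool" where
  "parallel_lc_ricci U g \<longleftrightarrow>
     (\<forall>x\<in>U. \<forall>m a b. pd (\<lambda>y. lc_ricci g y a b) m x
        - (\<Sum>c\<in>UNIV. christoffel g x c m a * lc_ricci g x c b)
        - (\<Sum>c\<in>UNIV. christoffel g x c m b * lc_ricci g x a c) = 0)"

(* purely axial torsion T = *A, A = k(phi) l, phi = x^3, l^mu = (1,0,0,0):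
   T_{kmn} = g_{kl} T^l_{mn} = k(phi) l^l eps_{lkmn}, eps_{lkmn} = sqrt|det g| [lkmn] *)
definition axial_torsion :: "pt set \<Rightarrow> tensor2 \<Rightarrow> conn \<Rightarrow> (real \<Rightarrow> real) \<Rightarrow> bool" where
  "axial_torsion U g G k \<longleftrightarrow>
     (\<forall>x\<in>U. \<forall>c m n. (\<Sum>l\<in>UNIV. g x c l * torsion G x l m n)
        = k (x$3) * (\<Sum>l\<in>UNIV. (if l = 0 then 1 else 0) * vol g x * eps l c m n))"

definition gen_ppwave_axial ::
  "pt set \<Rightarrow> (real \<Rightarrow> real \<Rightarrow> real \<Rightarrow> real) \<Rightarrow> (real \<Rightarrow> real) \<Rightarrow> conn \<Rightarrow> bool" where
  "gen_ppwave_axial U f k G \<longleftrightarrow>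
     open U \<and>
     cinf_on U (\<lambda>x. f (x$1) (x$2) (x$3)) \<and> cinf_on U (\<lambda>x. k (x$3)) \<and>
     (\<forall>l m n. cinf_on U (\<lambda>x. G x l m n)) \<and>
     metric_compatible U (pp_metric f) G \<and>
     axial_torsion U (pp_metric f) G k"

end

theory Submission
  imports Defs
begin

lemma four_eq_zero: "(4::4) = 0" by simp
lemma UNIV4: "(UNIV::4 set) = {0,1,2,3}" 
  using UNIV_4 four_eq_zero by auto
lemma sum4: "sum F (UNIV::4 set) = F 0 + F 1 + F 2 + F 3"
  unfolding UNIV4 by (simp add: ac_simps)
lemma all4: "(\<forall>i::4. P i) \<longleftrightarrow> P 0 \<and> P 1 \<and> P 2 \<and> P 3"
  by (metis UNIV4 UNIV_I insertE singletonD)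
lemma Rep4: "Rep_bit0 (0::4) = 0" "Rep_bit0 (1::4) = 1" "Rep_bit0 (2::4) = 2" "Rep_bit0 (3::4) = 3"
  by (simp_all add: bit0.Rep_numeral bit0.Rep_0 bit0.Rep_1)

definition hasd :: "(pt \<Rightarrow> real) \<Rightarrow> 4 \<Rightarrow> pt \<Rightarrow> real \<Rightarrow> bool" where
  "hasd F i x D \<longleftrightarrow> ((\<lambda>t. F (x + t *\<^sub>R axis i 1)) has_real_derivative D) (at 0)"

definition dif :: "(pt \<Rightarrow> real) \<Rightarrow> 4 \<Rightarrow> pt \<Rightarrow> bool" where
  "dif F i x \<longleftrightarrow> (\<exists>D. hasd F i x D)"

lemma pd_eq: "hasd F i x D \<Longrightarrow> pd F i x = D"
  unfolding hasd_def pd_def by (rule DERIV_imp_deriv)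

lemma hasd_pd: "dif F i x \<Longrightarrow> hasd F i x (pd F i x)"
  unfolding dif_def using pd_eq by metis

lemma hasd_add: "hasd A i x a \<Longrightarrow> hasd B i x b \<Longrightarrow> hasd (\<lambda>y. A y + B y) i x (a + b)"
  unfolding hasd_def by (rule DERIV_add)
lemma hasd_diff: "hasd A i x a \<Longrightarrow> hasd B i x b \<Longrightarrow> hasd (\<lambda>y. A y - B y) i x (a - b)"
  unfolding hasd_def by (rule DERIV_diff)
lemma hasd_mult: "hasd A i x a \<Longrightarrow> hasd B i x b \<Longrightarrow> hasd (\<lambda>y. A y * B y) i x (a * B x + A x * b)"
  unfolding hasd_def by (drule (1) DERIV_mult) (simp add: mult.commute)
lemma hasd_const: "hasd (\<lambda>y. c) i x 0"
  unfolding hasd_def by simp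
lemma hasd_minus: "hasd A i x a \<Longrightarrow> hasd (\<lambda>y. - A y) i x (- a)"
  unfolding hasd_def by (rule DERIV_minus)

lemma dif_add[simp]: "dif A i x \<Longrightarrow> dif B i x \<Longrightarrow> dif (\<lambda>y. A y + B y) i x"
  unfolding dif_def using hasd_add by blast
lemma dif_diff[simp]: "dif A i x \<Longrightarrow> dif B i x \<Longrightarrow> dif (\<lambda>y. A y - B y) i x"
  unfolding dif_def using hasd_diff by blast
lemma dif_mult[simp]: "dif A i x \<Longrightarrow> dif B i x \<Longrightarrow> dif (\<lambda>y. A y * B y) i x"
  unfolding dif_def using hasd_mult by blast
lemma dif_const[simp]: "dif (\<lambda>y. c) i x"
  unfolding dif_def using hasd_const by blast
lemma dif_minus[simp]: "dif A i x \<Longrightarrow> dif (\<lambda>y. - A y) i x"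
  unfolding dif_def using hasd_minus by blast
lemma dif_cmult[simp]: "dif A i x \<Longrightarrow> dif (\<lambda>y. c * A y) i x"
  using dif_mult[OF dif_const] by blast
lemma dif_multc[simp]: "dif A i x \<Longrightarrow> dif (\<lambda>y. A y * c) i x"
  using dif_mult[OF _ dif_const] by blast
lemma dif_divc[simp]: "dif A i x \<Longrightarrow> dif (\<lambda>y. A y / c) i x"
  using dif_multc[of A i x "1/c"] by simp

lemma pd_add[simp]: "dif A i x \<Longrightarrow> dif B i x \<Longrightarrow> pd (\<lambda>y. A y + B y) i x = pd A i x + pd B i x"
  by (intro pd_eq hasd_add hasd_pd)
lemma pd_diff[simp]: "dif A i x \<Longrightarrow> dif B i x \<Longrightarrow> pd (\<lambda>y. A y - B y) i x = pd A i x - pd B i x"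
  by (intro pd_eq hasd_diff hasd_pd)
lemma pd_mult[simp]: "dif A i x \<Longrightarrow> dif B i x \<Longrightarrow> pd (\<lambda>y. A y * B y) i x = pd A i x * B x + A x * pd B i x"
  by (intro pd_eq hasd_mult hasd_pd)
lemma pd_const[simp]: "pd (\<lambda>y. c) i x = 0"
  by (intro pd_eq hasd_const)
lemma pd_minus[simp]: "dif A i x \<Longrightarrow> pd (\<lambda>y. - A y) i x = - pd A i x"
  by (intro pd_eq hasd_minus hasd_pd)
lemma pd_cmult[simp]: "dif A i x \<Longrightarrow> pd (\<lambda>y. c * A y) i x = c * pd A i x"
  using pd_mult[OF dif_const, of A i x c] by simp
lemma pd_multc[simp]: "dif A i x \<Longrightarrow> pd (\<lambda>y. A y * c) i x = pd A i x * c"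
  using pd_mult[OF _ dif_const, of A i x c] by simp
lemma pd_divc[simp]: "dif A i x \<Longrightarrow> pd (\<lambda>y. A y / c) i x = pd A i x / c"
  using pd_multc[of A i x "1/c"] by simp

lemma pds_pd: "pds (pd F i) is = pds F (is @ [i])"
  by (induct "is") auto

lemma cinf_pd[simp]: "cinf_on U F \<Longrightarrow> cinf_on U (pd F i)"
  unfolding cinf_on_def pds_pd by (metis append_Cons)

lemma cinf_dif[simp]: "cinf_on U F \<Longrightarrow> x \<in> U \<Longrightarrow> dif F i x"
  unfolding cinf_on_def dif_def hasd_def by (metis pds.simps(1))

lemma cinf_cont: "cinf_on U F \<Longrightarrow> continuous_on U F"
  unfolding cinf_on_def by (metis pds.simps(1))

lemma cinf_hasd: "cinf_on U F \<Longrightarrow> x \<in> U \<Longrightarrow> hasd F i x (pd F i x)"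
  by (intro hasd_pd cinf_dif)

lemma ev_line: 
  fixes U :: "pt set" and i :: 4
  assumes "open U" "x \<in> U"
  shows "eventually (\<lambda>t. x + t *\<^sub>R axis i 1 \<in> U) (nhds (0::real))"
proof -
  obtain r where r: "r > 0" "ball x r \<subseteq> U" using assms open_contains_ball by blast
  show ?thesis unfolding eventually_nhds_metric
  proof (intro exI[of _ r] conjI allI impI)
    fix t :: real assume "dist t 0 < r"
    then have "dist x (x + t *\<^sub>R axis i 1) < r" by (simp add: dist_norm)
    then show "x + t *\<^sub>R axis i 1 \<in> U" using r by auto
  qed (use r in auto)
qed

lemma pd_local:
  assumes "open U" "x \<in> U" "\<And>y. y \<in> U \<Longrightarrow> F y = G y"
  shows "pd F i x = pd G i x"
  unfolding pd_def
  by (rule deriv_cong_ev[OF eventually_mono[OF ev_line[OF assms(1,2)]]]) (use assms in auto)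

lemma hasd_local:
  assumes "open U" "x \<in> U" "\<And>y. y \<in> U \<Longrightarrow> F y = G y"
  shows "hasd F i x D = hasd G i x D"
  unfolding hasd_def
  by (rule DERIV_cong_ev[OF refl eventually_mono[OF ev_line[OF assms(1,2)]] refl]) (use assms in auto)

lemma dif_local:
  assumes "open U" "x \<in> U" "\<And>y. y \<in> U \<Longrightarrow> F y = G y"
  shows "dif F i x = dif G i x"
proof -
  have "\<And>D. hasd F i x D = hasd G i x D" by (rule hasd_local) (use assms in auto)
  thus ?thesis unfolding dif_def by blast
qed

definition inv_dir :: "(pt \<Rightarrow> real) \<Rightarrow> 4 \<Rightarrow> bool" where
  "inv_dir F j \<longleftrightarrow> (\<forall>y t. F (y + t *\<^sub>R axis j 1) = F y)"

lemma inv_dir_pd0[simp]: "inv_dir F j \<Longrightarrow> pd F j y = 0"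
  unfolding inv_dir_def pd_def by simp

lemma inv_dir_pd[simp]: "inv_dir F j \<Longrightarrow> inv_dir (pd F i) j"
  unfolding inv_dir_def pd_def
proof (intro allI)
  fix y t assume "\<forall>y t. F (y + t *\<^sub>R axis j 1) = F y"
  then have "\<And>s. F (y + t *\<^sub>R axis j 1 + s *\<^sub>R axis i 1) = F (y + s *\<^sub>R axis i 1)"
    by (metis add.commute add.left_commute)
  then show "deriv (\<lambda>s. F (y + t *\<^sub>R axis j 1 + s *\<^sub>R axis i 1)) 0 = deriv (\<lambda>s. F (y + s *\<^sub>R axis i 1)) 0"
    by simp
qed


lemma line_deriv:
  assumes "cinf_on U F" "z0 + s0 *\<^sub>R axis i 1 \<in> U"
  shows "((\<lambda>s. F (z0 + s *\<^sub>R axis i 1)) has_real_derivative pd F i (z0 + s0 *\<^sub>R axis i 1)) (at s0)"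
proof -
  have "hasd F i (z0 + s0 *\<^sub>R axis i 1) (pd F i (z0 + s0 *\<^sub>R axis i 1))"
    using assms by (rule cinf_hasd)
  then have "((\<lambda>t. F (z0 + (t + s0) *\<^sub>R axis i 1)) has_real_derivative pd F i (z0 + s0 *\<^sub>R axis i 1)) (at 0)"
    unfolding hasd_def by (simp add: scaleR_add_left add.assoc add.commute add.left_commute)
  then show ?thesis using DERIV_shift[of "\<lambda>s. F (z0 + s *\<^sub>R axis i 1)" _ 0 s0] by simp
qed

lemma mixed_mvt:
  fixes F :: "pt \<Rightarrow> real" and x :: pt
  assumes U: "cinf_on U F" and r: "ball x r \<subseteq> U" and h: "0 < h" "2 * h < r"
  shows "\<exists>p. dist p x < 2 * h \<and>
     F (x + h *\<^sub>R axis i 1 + h *\<^sub>R axis j 1) - F (x + h *\<^sub>R axis i 1) - F (x + h *\<^sub>R axis j 1) + F x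
       = h * h * pd (pd F i) j p"
proof -
  let ?e = "axis i 1 :: pt" and ?u = "axis j 1 :: pt"
  have ne: "norm ?e = 1" "norm ?u = 1" by simp_all
  have inU: "x + s *\<^sub>R ?e + t *\<^sub>R ?u \<in> U" if "0 \<le> s" "s \<le> h" "0 \<le> t" "t \<le> h" for s t
  proof -
    have "norm (s *\<^sub>R ?e + t *\<^sub>R ?u) \<le> norm (s *\<^sub>R ?e) + norm (t *\<^sub>R ?u)" by (rule norm_triangle_ineq)
    also have "\<dots> = s + t" using that ne by simp
    finally have "dist (x + s *\<^sub>R ?e + t *\<^sub>R ?u) x < r" using that h by (simp add: dist_norm add.assoc)
    then show ?thesis using r by (auto simp: dist_commute)
  qed
  define \<phi> where "\<phi> s = F (x + h *\<^sub>R ?u + s *\<^sub>R ?e) - F (x + s *\<^sub>R ?e)" for s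
  have d\<phi>: "(\<phi> has_real_derivative (pd F i (x + h *\<^sub>R ?u + s *\<^sub>R ?e) - pd F i (x + s *\<^sub>R ?e))) (at s)"
    if "0 \<le> s" "s \<le> h" for s
    unfolding \<phi>_def
  proof (intro DERIV_diff)
    show "((\<lambda>s. F (x + h *\<^sub>R ?u + s *\<^sub>R ?e)) has_real_derivative pd F i (x + h *\<^sub>R ?u + s *\<^sub>R ?e)) (at s)"
      using line_deriv[OF U, of "x + h *\<^sub>R ?u" s i] inU[OF that less_imp_le[OF h(1)] order.refl] by (simp add: add.assoc add.commute add.left_commute)
    show "((\<lambda>s. F (x + s *\<^sub>R ?e)) has_real_derivative pd F i (x + s *\<^sub>R ?e)) (at s)"
      by (rule line_deriv[OF U]) (use inU[OF that order.refl h(1)[THEN less_imp_le]] in simp)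
  qed
  obtain s1 where s1: "0 < s1" "s1 < h"
    "\<phi> h - \<phi> 0 = (h - 0) * (pd F i (x + h *\<^sub>R ?u + s1 *\<^sub>R ?e) - pd F i (x + s1 *\<^sub>R ?e))"
    using MVT2[OF h(1), of \<phi>, OF d\<phi>] by auto
  define \<psi> where "\<psi> t = pd F i (x + s1 *\<^sub>R ?e + t *\<^sub>R ?u)" for t
  have d\<psi>: "(\<psi> has_real_derivative pd (pd F i) j (x + s1 *\<^sub>R ?e + t *\<^sub>R ?u)) (at t)"
    if "0 \<le> t" "t \<le> h" for t
    unfolding \<psi>_def
    by (rule line_deriv[OF cinf_pd[OF U]]) (use inU[OF _ _ that] s1 in auto)
  obtain t1 where t1: "0 < t1" "t1 < h"
    "\<psi> h - \<psi> 0 = (h - 0) * pd (pd F i) j (x + s1 *\<^sub>R ?e + t1 *\<^sub>R ?u)"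
    using MVT2[OF h(1), of \<psi>, OF d\<psi>] by auto
  let ?p = "x + s1 *\<^sub>R ?e + t1 *\<^sub>R ?u"
  have "norm (s1 *\<^sub>R ?e + t1 *\<^sub>R ?u) \<le> norm (s1 *\<^sub>R ?e) + norm (t1 *\<^sub>R ?u)" by (rule norm_triangle_ineq)
  also have "\<dots> = s1 + t1" using s1 t1 ne by simp
  finally have "dist ?p x < 2 * h" using s1 t1 by (simp add: dist_norm add.assoc)
  moreover have "F (x + h *\<^sub>R ?e + h *\<^sub>R ?u) - F (x + h *\<^sub>R ?e) - F (x + h *\<^sub>R ?u) + F x = \<phi> h - \<phi> 0"
    unfolding \<phi>_def by (simp add: algebra_simps)
  moreover have "\<phi> h - \<phi> 0 = h * (\<psi> h - \<psi> 0)"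
    using s1(3) unfolding \<psi>_def by (simp add: algebra_simps)
  ultimately show ?thesis using t1(3) by (intro exI[of _ ?p]) simp
qed

lemma clairaut:
  fixes F :: "pt \<Rightarrow> real"
  assumes "open U" "cinf_on U F" "x \<in> U"
  shows "pd (pd F i) j x = pd (pd F j) i x"
proof (rule ccontr)
  assume ne: "pd (pd F i) j x \<noteq> pd (pd F j) i x"
  define \<epsilon> where "\<epsilon> = \<bar>pd (pd F i) j x - pd (pd F j) i x\<bar> / 2"
  have \<epsilon>: "\<epsilon> > 0" using ne by (simp add: \<epsilon>_def)
  obtain r where r: "r > 0" "ball x r \<subseteq> U" using assms open_contains_ball by blast
  have c1: "continuous (at x) (pd (pd F i) j)"
    using cinf_cont[OF cinf_pd[OF cinf_pd[OF assms(2)]]] assms continuous_on_eq_continuous_at by blast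
  have c2: "continuous (at x) (pd (pd F j) i)"
    using cinf_cont[OF cinf_pd[OF cinf_pd[OF assms(2)]]] assms continuous_on_eq_continuous_at by blast
  obtain d1 where d1: "d1 > 0" "\<And>y. dist y x < d1 \<Longrightarrow> dist (pd (pd F i) j y) (pd (pd F i) j x) < \<epsilon>"
    using c1 \<epsilon> unfolding continuous_at_eps_delta by blast
  obtain d2 where d2: "d2 > 0" "\<And>y. dist y x < d2 \<Longrightarrow> dist (pd (pd F j) i y) (pd (pd F j) i x) < \<epsilon>"
    using c2 \<epsilon> unfolding continuous_at_eps_delta by blast
  define h where "h = min r (min d1 d2) / 4"
  have h: "0 < h" "2 * h < r" "2 * h < d1" "2 * h < d2" using r d1 d2 by (auto simp: h_def)
  obtain p1 where p1: "dist p1 x < 2 * h"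
     "F (x + h *\<^sub>R axis i 1 + h *\<^sub>R axis j 1) - F (x + h *\<^sub>R axis i 1) - F (x + h *\<^sub>R axis j 1) + F x
       = h * h * pd (pd F i) j p1"
    using mixed_mvt[OF assms(2) r(2) h(1,2)] by blast
  obtain p2 where p2: "dist p2 x < 2 * h"
     "F (x + h *\<^sub>R axis j 1 + h *\<^sub>R axis i 1) - F (x + h *\<^sub>R axis j 1) - F (x + h *\<^sub>R axis i 1) + F x
       = h * h * pd (pd F j) i p2"
    using mixed_mvt[OF assms(2) r(2) h(1,2)] by blast
  have "h * h * pd (pd F i) j p1 = h * h * pd (pd F j) i p2"
    using p1(2) p2(2) by (simp add: algebra_simps)
  then have eq: "pd (pd F i) j p1 = pd (pd F j) i p2" using h(1) by simp
  have "dist (pd (pd F i) j p1) (pd (pd F i) j x) < \<epsilon>" using d1 p1 h by auto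
  moreover have "dist (pd (pd F j) i p2) (pd (pd F j) i x) < \<epsilon>" using d2 p2 h by auto
  ultimately have "\<bar>pd (pd F i) j x - pd (pd F j) i x\<bar> < 2 * \<epsilon>"
    using eq by (simp add: dist_real_def)
  then show False by (simp add: \<epsilon>_def)
qed


definition Fm :: "(real \<Rightarrow> real \<Rightarrow> real \<Rightarrow> real) \<Rightarrow> pt \<Rightarrow> real" where
  "Fm f x = f (x$1) (x$2) (x$3)"

definition gip :: "(real \<Rightarrow> real \<Rightarrow> real \<Rightarrow> real) \<Rightarrow> pt \<Rightarrow> 4 \<Rightarrow> 4 \<Rightarrow> real" where
  "gip f x a b =
     (if (a = 0 \<and> b = 3) \<or> (a = 3 \<and> b = 0) then 1
      else if a = b \<and> (a = 1 \<or> a = 2) then -1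
      else if a = 0 \<and> b = 0 then - f (x$1) (x$2) (x$3)
      else 0)"

lemma matrix_inv_eqI:
  fixes A B :: "real^4^4"
  assumes "A ** B = mat 1" "B ** A = mat 1"
  shows "matrix_inv A = B"
proof -
  have ex: "\<exists>A'. A ** A' = mat 1 \<and> A' ** A = mat 1" using assms by blast
  define C where "C = matrix_inv A"
  have C: "A ** C = mat 1" "C ** A = mat 1"
    using someI_ex[OF ex] unfolding C_def matrix_inv_def by auto
  have "C = C ** (A ** B)" using assms by simp
  also have "\<dots> = (C ** A) ** B" by (simp add: matrix_mul_assoc)
  also have "\<dots> = B" using C by simp
  finally show ?thesis unfolding C_def .
qed

lemma ginv_pp: "ginv (pp_metric f) x a b = gip f x a b"
proof -
  let ?B = "(\<chi> i j. gip f x i j) :: real^4^4"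
  have 1: "gmat (pp_metric f) x ** ?B = mat 1"
    unfolding vec_eq_iff matrix_matrix_mult_def gmat_def mat_def
    by (simp add: all4 sum4 pp_metric_def gip_def)
  have 2: "?B ** gmat (pp_metric f) x = mat 1"
    unfolding vec_eq_iff matrix_matrix_mult_def gmat_def mat_def
    by (simp add: all4 sum4 pp_metric_def gip_def)
  show ?thesis unfolding ginv_def matrix_inv_eqI[OF 1 2] by simp
qed

lemma less4: "\<And>i j::4. j < i \<longleftrightarrow> Rep_bit0 j < Rep_bit0 i"
  by (simp add: less_bit0_def)

lemma det_pp: "det (gmat (pp_metric f) x) = -1"
proof -
  let ?M = "gmat (pp_metric f) x"
  define p where "p = Transposition.transpose (0::4) 3"
  have p: "p permutes UNIV" unfolding p_def by (rule permutes_swap_id) auto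
  have dp: "det (\<chi> i. ?M $ p i) = of_int (sign p) * det ?M" by (rule det_permute_rows[OF p])
  define N where "N = (\<chi> i j. pp_metric f x (p i) j :: real^4^4)"
  have N: "(\<chi> i. ?M $ p i) = N" unfolding N_def gmat_def by (simp add: vec_eq_iff)
  have up: "\<forall>i j::4. j < i \<longrightarrow> N $ i $ j = 0"
    unfolding N_def p_def
    apply (simp only: all4)
    apply (simp add: less4 Rep4 pp_metric_def Transposition.transpose_def)
    done
  have "det N = prod (\<lambda>i. N $ i $ i) UNIV"
    by (rule det_upperdiagonal) (use up in blast)
  also have "\<dots> = 1" unfolding UNIV4 N_def p_def by (simp add: pp_metric_def Transposition.transpose_def)
  finally have "det N = 1" .
  moreover have "sign p = -1" unfolding p_def by (simp add: sign_swap_id)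
  ultimately show ?thesis using dp N by simp
qed

lemma vol_pp: "vol (pp_metric f) x = 1"
  unfolding vol_def det_pp by simp


definition Kf :: "(real \<Rightarrow> real) \<Rightarrow> pt \<Rightarrow> real" where
  "Kf k y = k (y$3)"

definition Gtab :: "(real \<Rightarrow> real \<Rightarrow> real \<Rightarrow> real) \<Rightarrow> (pt \<Rightarrow> real) \<Rightarrow> pt \<Rightarrow> 4 \<Rightarrow> 4 \<Rightarrow> 4 \<Rightarrow> real" where
  "Gtab f \<kappa> y l m n =
    (if l = 0 \<and> m = 1 \<and> n = 2 then \<kappa> y / 2
     else if l = 0 \<and> m = 2 \<and> n = 1 then - \<kappa> y / 2
     else if l = 1 \<and> m = 2 \<and> n = 3 then - \<kappa> y / 2
     else if l = 1 \<and> m = 3 \<and> n = 2 then \<kappa> y / 2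
     else if l = 2 \<and> m = 1 \<and> n = 3 then \<kappa> y / 2
     else if l = 2 \<and> m = 3 \<and> n = 1 then - \<kappa> y / 2
     else if l = 0 \<and> m = 1 \<and> n = 3 then pd (Fm f) 1 y / 2
     else if l = 0 \<and> m = 3 \<and> n = 1 then pd (Fm f) 1 y / 2
     else if l = 0 \<and> m = 2 \<and> n = 3 then pd (Fm f) 2 y / 2
     else if l = 0 \<and> m = 3 \<and> n = 2 then pd (Fm f) 2 y / 2
     else if l = 0 \<and> m = 3 \<and> n = 3 then pd (Fm f) 3 y / 2
     else if l = 1 \<and> m = 3 \<and> n = 3 then pd (Fm f) 1 y / 2
     else if l = 2 \<and> m = 3 \<and> n = 3 then pd (Fm f) 2 y / 2
     else 0)"

lemma pp_indep: assumes h: "\<not> (a = 3 \<and> b = 3)" shows "pp_metric f y a b = pp_metric f z a b" 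
  unfolding pp_metric_def if_not_P[OF h] by (rule refl)

lemma pd_pp: "pd (\<lambda>y. pp_metric f y a b) m x = (if a = 3 \<and> b = 3 then pd (Fm f) m x else 0)"
proof (cases "a = 3 \<and> b = 3")
  case True
  then have "(\<lambda>y. pp_metric f y a b) = Fm f" by (intro ext) (simp add: pp_metric_def Fm_def)
  then show ?thesis using True by simp
next
  case False
  then have "(\<lambda>y. pp_metric f y a b) = (\<lambda>y. pp_metric f 0 a b)" by (intro ext pp_indep)
  then show ?thesis using False by (simp only: if_not_P[OF False] if_False pd_const)
qed

lemma lower_id:
  fixes \<Gamma> :: "4 \<Rightarrow> 4 \<Rightarrow> 4 \<Rightarrow> real"
  shows "\<Gamma> c m n = ((\<Gamma> c m n + \<Gamma> n m c) + (\<Gamma> c n m + \<Gamma> m n c) - (\<Gamma> m c n + \<Gamma> n c m)) / 2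
     + ((\<Gamma> c m n - \<Gamma> c n m) + (\<Gamma> n c m - \<Gamma> n m c) + (\<Gamma> m c n - \<Gamma> m n c)) / 2"
  by (simp add: field_simps)

lemma raise_pp:
  "G x l m n = (\<Sum>c\<in>UNIV. gip f x l c * (\<Sum>l'\<in>UNIV. pp_metric f x c l' * G x l' m n))"
proof -
  have "\<forall>l. G x l m n = (\<Sum>c\<in>UNIV. gip f x l c * (\<Sum>l'\<in>UNIV. pp_metric f x c l' * G x l' m n))"
    by (simp only: all4) (simp add: sum4 gip_def pp_metric_def)
  then show ?thesis by blast
qed

lemma spec3: "\<forall>a b c. P a b c \<Longrightarrow> P a b c" by blast

lemma glf0:
  fixes gl :: "4 \<Rightarrow> 4 \<Rightarrow> 4 \<Rightarrow> real"
  assumes M: "\<And>a b m. gl a m b + gl b m a = MM m a b"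
  and T: "\<And>c m n. gl c m n - gl c n m = TT c m n"
  shows "gl c m n = (MM m c n + MM n c m - MM c m n) / 2 + (TT c m n + TT n c m + TT m c n) / 2"
proof -
  have "gl c m n = ((gl c m n + gl n m c) + (gl c n m + gl m n c) - (gl m c n + gl n c m)) / 2
     + ((gl c m n - gl c n m) + (gl n c m - gl n m c) + (gl m c n - gl m n c)) / 2"
    by (rule lower_id)
  also have "\<dots> = (MM m c n + MM n c m - MM c m n) / 2 + (TT c m n + TT n c m + TT m c n) / 2"
    by (simp only: M T)
  finally show ?thesis .
qed

lemma Fm_inv0[simp]: "inv_dir (Fm f) 0"
  unfolding inv_dir_def Fm_def by (simp add: axis_def)

lemma pp_sym: "pp_metric f x a b = pp_metric f x b a" by (auto simp: pp_metric_def)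

lemma M_pp:
  assumes x: "x \<in> U" and mc: "metric_compatible U (pp_metric f) G"
  shows "(\<Sum>l\<in>UNIV. pp_metric f x a l * G x l m b) + (\<Sum>l\<in>UNIV. pp_metric f x b l * G x l m a)
     = (if a = 3 \<and> b = 3 then pd (Fm f) m x else 0)"
proof -
  have "pd (\<lambda>y. pp_metric f y a b) m x - (\<Sum>c\<in>UNIV. G x c m a * pp_metric f x c b)
                        - (\<Sum>c\<in>UNIV. G x c m b * pp_metric f x a c) = 0"
    using mc x unfolding metric_compatible_def by blast
  moreover have "(\<Sum>c\<in>UNIV. G x c m a * pp_metric f x c b) = (\<Sum>l\<in>UNIV. pp_metric f x b l * G x l m a)"
    by (rule sum.cong[OF refl]) (simp add: pp_sym[of f x _ b] mult.commute)
  moreover have "(\<Sum>c\<in>UNIV. G x c m b * pp_metric f x a c) = (\<Sum>l\<in>UNIV. pp_metric f x a l * G x l m b)"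
    by (rule sum.cong[OF refl]) (simp add: mult.commute)
  ultimately show ?thesis unfolding pd_pp by linarith
qed

lemma T_pp:
  assumes x: "x \<in> U" and ax: "axial_torsion U (pp_metric f) G k"
  shows "(\<Sum>l\<in>UNIV. pp_metric f x c l * G x l m n) - (\<Sum>l\<in>UNIV. pp_metric f x c l * G x l n m) = k (x$3) * eps 0 c m n"
proof -
    have "(\<Sum>l\<in>UNIV. pp_metric f x c l * torsion G x l m n)
        = k (x$3) * (\<Sum>l\<in>UNIV. (if l = 0 then 1 else 0) * vol (pp_metric f) x * eps l c m n)"
      using ax x unfolding axial_torsion_def by blast
    moreover have "(\<Sum>l\<in>UNIV. pp_metric f x c l * torsion G x l m n) = (\<Sum>l\<in>UNIV. pp_metric f x c l * G x l m n) - (\<Sum>l\<in>UNIV. pp_metric f x c l * G x l n m)"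
      unfolding torsion_def by (simp add: sum_subtractf right_diff_distrib)
    moreover have "(\<Sum>l\<in>UNIV. (if l = 0 then 1 else 0) * vol (pp_metric f) x * eps l c m n) = eps 0 c m n"
      unfolding vol_pp sum4 by simp
    ultimately show ?thesis by simp
qed

lemma G_explicit:
  assumes x: "x \<in> U" and mc: "metric_compatible U (pp_metric f) G" and ax: "axial_torsion U (pp_metric f) G k"
  shows "G x l m n = Gtab f (Kf k) x l m n"
proof -
  define gl where "gl c m n = (\<Sum>l\<in>UNIV. pp_metric f x c l * G x l m n)" for c m n
  have raise: "G x l m n = (\<Sum>c\<in>UNIV. gip f x l c * gl c m n)" for l m n
    unfolding gl_def by (rule raise_pp)
  define MM :: "4 \<Rightarrow> 4 \<Rightarrow> 4 \<Rightarrow> real" where "MM m a b = (if a = 3 \<and> b = 3 then pd (Fm f) m x else 0)" for m a b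
  define TT :: "4 \<Rightarrow> 4 \<Rightarrow> 4 \<Rightarrow> real" where "TT c m n = k (x$3) * eps 0 c m n" for c m n
  have M: "gl a m b + gl b m a = MM m a b" for a b m
    unfolding gl_def MM_def by (rule M_pp[OF x mc])
  have T: "gl c m n - gl c n m = TT c m n" for c m n
    unfolding gl_def TT_def by (rule T_pp[OF x ax])
  have glf: "gl c m n = (MM m c n + MM n c m - MM c m n) / 2 + (TT c m n + TT n c m + TT m c n) / 2" for c m n
    by (rule glf0) (simp_all only: M T)
  have "\<forall>l m n. G x l m n = Gtab f (Kf k) x l m n"
    apply (simp only: all4)
    apply (simp only: raise sum4 gip_def)
    apply simp
    apply (simp only: glf MM_def TT_def)
    apply (simp add: eps_def Rep4)
    apply (simp add: Gtab_def Kf_def)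
    done
  then show ?thesis by (rule spec3)
qed


definition Rtab :: "(real \<Rightarrow> real \<Rightarrow> real \<Rightarrow> real) \<Rightarrow> (pt \<Rightarrow> real) \<Rightarrow> pt \<Rightarrow> 4 \<Rightarrow> 4 \<Rightarrow> 4 \<Rightarrow> 4 \<Rightarrow> real" where
  "Rtab f \<kappa> y k l m n =
    (let A = pd (pd (Fm f) 1) 1 y / 2 - \<kappa> y * \<kappa> y / 4;
         B = pd (pd (Fm f) 1) 2 y / 2 + pd \<kappa> 3 y / 2;
         C = pd (pd (Fm f) 1) 2 y / 2 - pd \<kappa> 3 y / 2;
         D = pd (pd (Fm f) 2) 2 y / 2 - \<kappa> y * \<kappa> y / 4 in
     if (k = 0 \<and> l = 1) \<or> (k = 1 \<and> l = 3) then
       (if m = 1 \<and> n = 3 then A else if m = 3 \<and> n = 1 then - A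
        else if m = 2 \<and> n = 3 then B else if m = 3 \<and> n = 2 then - B else 0)
     else if (k = 0 \<and> l = 2) \<or> (k = 2 \<and> l = 3) then
       (if m = 1 \<and> n = 3 then C else if m = 3 \<and> n = 1 then - C
        else if m = 2 \<and> n = 3 then D else if m = 3 \<and> n = 2 then - D else 0)
     else 0)"

lemma spec4: "\<forall>a b c d. P a b c d \<Longrightarrow> P a b c d" by blast

lemma curv_Gtab:
  assumes U: "open U" "x \<in> U" and cf: "cinf_on U (Fm f)" and ck: "cinf_on U \<kappa>"
    and i0: "inv_dir \<kappa> 0" and i1: "inv_dir \<kappa> 1" and i2: "inv_dir \<kappa> 2"
  shows "curv (Gtab f \<kappa>) x k l m n = Rtab f \<kappa> x k l m n"
proof -
  have [simp]: "dif \<kappa> i x" for i using ck U by simp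
  have [simp]: "dif (pd (Fm f) j) i x" for i j by (rule cinf_dif[OF cinf_pd[OF cf] U(2)])
  have [simp]: "pd \<kappa> 0 x = 0" "pd \<kappa> 1 x = 0" "pd \<kappa> 2 x = 0" using i0 i1 i2 by simp_all
  have cl: "pd (pd (Fm f) i) j x = pd (pd (Fm f) j) i x" for i j by (rule clairaut[OF U(1) cf U(2)])
  note cls[simp] = cl[of 2 1] cl[of 3 1] cl[of 3 2]
  have "\<forall>k l m n. curv (Gtab f \<kappa>) x k l m n = Rtab f \<kappa> x k l m n"
    apply (simp only: all4)
    apply (simp add: curv_def sum4 Gtab_def)
    apply (simp add: Rtab_def Let_def)
    done
  then show ?thesis by (rule spec4)
qed


lemma Rtab_zero:
  assumes h: "\<not> ((k = 0 \<and> l = 1) \<or> (k = 1 \<and> l = 3))" "\<not> ((k = 0 \<and> l = 2) \<or> (k = 2 \<and> l = 3))"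
  shows "Rtab f \<kappa> y k l m n = 0"
  unfolding Rtab_def Let_def if_not_P[OF h(1)] if_not_P[OF h(2)] by (rule refl)

lemma RR_zero: "Rtab f \<kappa> y k l m n * Rtab f \<kappa> y l k a b = 0"
proof -
  have "\<forall>k l. Rtab f \<kappa> y k l m n * Rtab f \<kappa> y l k a b = 0"
    apply (simp only: all4)
    apply (simp add: Rtab_zero)
    done
  then show ?thesis by blast
qed

lemma christoffel_pp: "christoffel (pp_metric f) y l m n = Gtab f (\<lambda>_. 0) y l m n"
proof -
  have "\<forall>l m n. christoffel (pp_metric f) y l m n = Gtab f (\<lambda>_. 0) y l m n"
    unfolding christoffel_def ginv_pp pd_pp
    apply (simp only: all4)
    apply (simp add: sum4 gip_def Gtab_def)
    done
  then show ?thesis by (rule spec3)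
qed

lemma cinf_const[simp]: "cinf_on U (\<lambda>y. c)"
proof -
  have pz: "pds (\<lambda>y. c) (i # is) = (\<lambda>y. 0)" for i "is"
  proof (induct "is" arbitrary: i)
    case Nil
    show ?case by (simp add: fun_eq_iff)
  next
    case (Cons a "is")
    have "pds (\<lambda>y. c) (i # a # is) = pd (pds (\<lambda>y. c) (a # is)) i" by simp
    also have "\<dots> = pd (\<lambda>y. 0) i" using Cons by simp
    finally show ?case by (simp add: fun_eq_iff)
  qed
  have "pds (\<lambda>y. c) is = (\<lambda>y. if is = [] then c else 0)" for "is"
    by (cases "is") (simp, simp only: pz list.distinct if_False)
  then show ?thesis unfolding cinf_on_def by (auto simp: hasd_def[symmetric] hasd_const)
qed

lemma inv_dir_const[simp]: "inv_dir (\<lambda>y. c) j" by (simp add: inv_dir_def)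

lemma ricci_pp:
  assumes U: "open U" "x \<in> U" and cf: "cinf_on U (Fm f)"
  shows "lc_ricci (pp_metric f) x l n =
    (if l = 3 \<and> n = 3 then (pd (pd (Fm f) 1) 1 x + pd (pd (Fm f) 2) 2 x) / 2 else 0)"
proof -
  have ch: "christoffel (pp_metric f) = Gtab f (\<lambda>_. 0)" by (intro ext christoffel_pp)
  have c: "curv (christoffel (pp_metric f)) x k l m n = Rtab f (\<lambda>_. 0) x k l m n" for k l m n
    unfolding ch by (rule curv_Gtab[OF U cf]) simp_all
  have "\<forall>l n. lc_ricci (pp_metric f) x l n =
    (if l = 3 \<and> n = 3 then (pd (pd (Fm f) 1) 1 x + pd (pd (Fm f) 2) 2 x) / 2 else 0)"
    unfolding lc_ricci_def c
    apply (simp only: all4)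
    apply (simp add: sum4 Rtab_def Let_def)
    done
  then show ?thesis by blast
qed

lemma ricci_cond:
  assumes U: "open U" "x \<in> U" and cf: "cinf_on U (Fm f)" and par: "parallel_lc_ricci U (pp_metric f)"
  shows "pd (pd (pd (Fm f) 1) 1) m x + pd (pd (pd (Fm f) 2) 2) m x = 0"
proof -
  have "pd (\<lambda>y. lc_ricci (pp_metric f) y 3 3) m x
        - (\<Sum>c\<in>UNIV. christoffel (pp_metric f) x c m 3 * lc_ricci (pp_metric f) x c 3)
        - (\<Sum>c\<in>UNIV. christoffel (pp_metric f) x c m 3 * lc_ricci (pp_metric f) x 3 c) = 0"
    using par U unfolding parallel_lc_ricci_def by blast
  moreover have "(\<Sum>c\<in>UNIV. christoffel (pp_metric f) x c m 3 * lc_ricci (pp_metric f) x c 3) = 0"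
    unfolding ricci_pp[OF U cf] christoffel_pp by (simp add: sum4 Gtab_def)
  moreover have "(\<Sum>c\<in>UNIV. christoffel (pp_metric f) x c m 3 * lc_ricci (pp_metric f) x 3 c) = 0"
    unfolding ricci_pp[OF U cf] christoffel_pp by (simp add: sum4 Gtab_def)
  moreover have "pd (\<lambda>y. lc_ricci (pp_metric f) y 3 3) m x
      = pd (\<lambda>y. (pd (pd (Fm f) 1) 1 y + pd (pd (Fm f) 2) 2 y) / 2) m x"
    by (rule pd_local[OF U]) (simp add: ricci_pp[OF U(1) _ cf])
  moreover have "pd (\<lambda>y. (pd (pd (Fm f) 1) 1 y + pd (pd (Fm f) 2) 2 y) / 2) m x
      = (pd (pd (pd (Fm f) 1) 1) m x + pd (pd (pd (Fm f) 2) 2) m x) / 2"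
  proof -
    have d: "dif (pd (pd (Fm f) i) j) m x" for i j by (rule cinf_dif[OF cinf_pd[OF cinf_pd[OF cf]] U(2)])
    show ?thesis using d by simp
  qed
  ultimately show ?thesis by simp
qed


lemma curv_local:
  assumes U: "open U" "x \<in> U" and eq: "\<And>y a b c. y \<in> U \<Longrightarrow> G y a b c = G' y a b c"
  shows "curv G x k l m n = curv G' x k l m n"
proof -
  have p: "pd (\<lambda>y. G y a b c) i x = pd (\<lambda>y. G' y a b c) i x" for a b c i
    by (rule pd_local[OF U]) (rule eq)
  show ?thesis unfolding curv_def p using eq[OF U(2)] by simp
qed

lemma Kf_inv[simp]: "inv_dir (Kf k) 0" "inv_dir (Kf k) 1" "inv_dir (Kf k) 2"
  unfolding inv_dir_def Kf_def by (simp_all add: axis_def)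

lemma Kf_eq: "(\<lambda>x. k (x$3)) = Kf k" by (simp add: Kf_def fun_eq_iff)
lemma Fm_eq: "(\<lambda>x. f (x$1) (x$2) (x$3)) = Fm f" by (simp add: Fm_def fun_eq_iff)

lemma gpa_facts:
  assumes "gen_ppwave_axial U f k G"
  shows "open U" "cinf_on U (Fm f)" "cinf_on U (Kf k)" "\<And>l m n. cinf_on U (\<lambda>x. G x l m n)"
    "metric_compatible U (pp_metric f) G" "axial_torsion U (pp_metric f) G k"
  using assms unfolding gen_ppwave_axial_def Kf_eq Fm_eq by auto

lemma curv_R:
  assumes g: "gen_ppwave_axial U f k G" and x: "x \<in> U"
  shows "curv G x k' l m n = Rtab f (Kf k) x k' l m n"
proof -
  note gf = gpa_facts[OF g]
  have "curv G x k' l m n = curv (Gtab f (Kf k)) x k' l m n"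
    by (rule curv_local[OF gf(1) x]) (rule G_explicit[OF _ gf(5,6)])
  also have "\<dots> = Rtab f (Kf k) x k' l m n"
    by (rule curv_Gtab[OF gf(1) x gf(2) gf(3)]) simp_all
  finally show ?thesis .
qed

lemma density_zero:
  assumes g: "gen_ppwave_axial U f k G" and x: "x \<in> U"
  shows "ym_density g' G x = 0"
  unfolding ym_density_def curv_R[OF g x] by (simp add: RR_zero)

theorem EL_metric_pp:
  assumes g: "gen_ppwave_axial U f k G"
  shows "EL_metric U (pp_metric f) G"
  unfolding EL_metric_def
proof (intro allI impI)
  fix h :: "pt \<Rightarrow> 4 \<Rightarrow> 4 \<Rightarrow> real" and K :: "pt set" assume hK: "compact K \<and> K \<subseteq> U \<and> (\<forall>a b. cinf_on UNIV (\<lambda>x. h x a b) \<and> (\<forall>x. h x a b = h x b a) \<and> (\<forall>x. x \<notin> K \<longrightarrow> h x a b = 0))"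
  have "ym_action K (\<lambda>x a b. pp_metric f x a b + \<epsilon> * h x a b) G = 0" for \<epsilon>
  proof -
    have "ym_action K (\<lambda>x a b. pp_metric f x a b + \<epsilon> * h x a b) G = integral K (\<lambda>x. 0)"
      unfolding ym_action_def by (rule integral_cong) (use hK density_zero[OF g] in auto)
    then show ?thesis by simp
  qed
  then show "((\<lambda>\<epsilon>. ym_action K (\<lambda>x a b. pp_metric f x a b + \<epsilon> * h x a b) G) has_real_derivative 0) (at 0)"
    by simp
qed


lemma int_indep:
  fixes V :: "pt \<Rightarrow> real"
  assumes "\<And>y. y \<notin> K \<Longrightarrow> V y = 0" "K \<subseteq> S"
  shows "integral S V = integral UNIV V"
proof -
  have "(\<lambda>x. if x \<in> S then V x else 0) = V" using assms by (auto simp: fun_eq_iff)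
  then show ?thesis using integral_restrict_UNIV[of S V] by simp
qed

lemma hasd_shift:
  assumes "hasd V a (y + s *\<^sub>R axis a 1) D"
  shows "((\<lambda>s. V (y + s *\<^sub>R axis a 1)) has_real_derivative D) (at s)"
proof -
  have "((\<lambda>t. V (y + (t + s) *\<^sub>R axis a 1)) has_real_derivative D) (at 0)"
    using assms unfolding hasd_def by (simp add: scaleR_add_left add.assoc add.commute add.left_commute)
  then show ?thesis using DERIV_shift[of "\<lambda>s. V (y + s *\<^sub>R axis a 1)" _ 0 s] by simp
qed

lemma int_pd_zero:
  fixes V DV :: "pt \<Rightarrow> real" and lo hi :: pt
  assumes hV: "\<And>y. hasd V a y (DV y)" and cV: "continuous_on UNIV V" and cDV: "continuous_on UNIV DV"
    and K0: "\<And>y. y \<notin> K \<Longrightarrow> V y = 0" and Kb: "K \<subseteq> cbox lo hi"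
  shows "integral (cbox (lo - (\<chi> i. 1)) (hi + (\<chi> i. 1))) DV = 0"
proof -
  define e :: pt where "e = axis a 1"
  define l1 :: pt where "l1 = lo - (\<chi> i. 1)"
  define h1 :: pt where "h1 = hi + (\<chi> i. 1)"
  define F where "F s = integral (cbox l1 h1) (\<lambda>y. V (y + s *\<^sub>R e))" for s
  have const: "F s = integral UNIV V" if s: "s \<in> {-1..1}" for s
  proof -
    have "F s = integral (cbox (l1 + s *\<^sub>R e) (h1 + s *\<^sub>R e)) V"
      unfolding F_def using integral_shift_cbox[of "l1 + s *\<^sub>R e" "s *\<^sub>R e" "h1 + s *\<^sub>R e" V] by simp
    also have "\<dots> = integral UNIV V"
    proof (rule int_indep[OF K0])
      show "K \<subseteq> cbox (l1 + s *\<^sub>R e) (h1 + s *\<^sub>R e)"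
      proof
        fix y assume "y \<in> K"
        then have y: "lo $ i \<le> y $ i \<and> y $ i \<le> hi $ i" for i using Kb by (auto simp: mem_box_cart)
        have "(l1 + s *\<^sub>R e) $ i \<le> y $ i \<and> y $ i \<le> (h1 + s *\<^sub>R e) $ i" for i
          using y[of i] s by (auto simp: l1_def h1_def e_def axis_def)
        then show "y \<in> cbox (l1 + s *\<^sub>R e) (h1 + s *\<^sub>R e)" by (simp add: mem_box_cart)
      qed
    qed auto
    finally show ?thesis .
  qed
  have der: "(F has_field_derivative integral (cbox l1 h1) (\<lambda>y. DV (y + 0 *\<^sub>R e))) (at 0 within {-1..1})"
    unfolding F_def
  proof (rule leibniz_rule_field_derivative[where fx = "\<lambda>s y. DV (y + s *\<^sub>R e)"])
    fix s :: real and y :: pt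
    show "((\<lambda>s. V (y + s *\<^sub>R e)) has_field_derivative DV (y + s *\<^sub>R e)) (at s within {-1..1})"
      unfolding e_def by (rule has_field_derivative_at_within, rule hasd_shift, rule hV)
  next
    fix s :: real
    show "(\<lambda>y. V (y + s *\<^sub>R e)) integrable_on cbox l1 h1"
      by (rule integrable_continuous, rule continuous_on_compose2[OF cV]) (auto intro!: continuous_intros)
  next
    show "continuous_on ({-1..1} \<times> cbox l1 h1) (\<lambda>(s, y). DV (y + s *\<^sub>R e))"
    proof -
      have eq: "(\<lambda>(s, y). DV (y + s *\<^sub>R e)) = (\<lambda>p. DV (snd p + fst p *\<^sub>R e))" by (auto simp: fun_eq_iff)
      have "continuous_on ({-1..1} \<times> cbox l1 h1) (\<lambda>p. DV (snd p + fst p *\<^sub>R e))"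
        by (rule continuous_on_compose2[OF cDV]) (auto intro!: continuous_intros)
      then show ?thesis unfolding eq .
    qed
  qed auto
  then have der': "(F has_field_derivative integral (cbox l1 h1) DV) (at 0)"
    using at_within_interior[of 0 "{-1..1::real}"] by simp
  have "eventually (\<lambda>s. F s = integral UNIV V) (nhds 0)"
    unfolding eventually_nhds_metric
  proof (intro exI[of _ 1] conjI allI impI)
    fix s :: real assume "dist s 0 < 1"
    then have "s \<in> {-1..1}" by (auto simp: dist_real_def)
    then show "F s = integral UNIV V" by (rule const)
  qed simp
  then have "(F has_field_derivative 0) (at 0)"
    using DERIV_cong_ev[of 0 0 "\<lambda>s. integral UNIV V" F 0 0] by (simp add: eventually_mono)
  then show ?thesis using DERIV_unique[OF der'] unfolding l1_def h1_def by simp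
qed

lemma cont_glue:
  fixes P :: "pt \<Rightarrow> real"
  assumes "open U" "K \<subseteq> U" "compact K" "continuous_on U P" "\<And>x. x \<notin> K \<Longrightarrow> P x = 0"
  shows "continuous_on UNIV P"
proof -
  have "continuous_on (- K) P"
    using continuous_on_cong[of "-K" "-K" P "\<lambda>_. 0"] assms(5) by auto
  moreover have "open (- K)" using assms(3) compact_imp_closed by blast
  moreover have "U \<union> - K = UNIV" using assms(2) by auto
  ultimately show ?thesis using continuous_on_open_Un[OF assms(1) _ assms(4)] by metis
qed


definition Sx :: "conn \<Rightarrow> conn \<Rightarrow> pt \<Rightarrow> 4 \<Rightarrow> 4 \<Rightarrow> 4 \<Rightarrow> 4 \<Rightarrow> real" where
  "Sx G H x k l m n = pd (\<lambda>y. H y k n l) m x - pd (\<lambda>y. H y k m l) n x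
     + (\<Sum>e\<in>UNIV. G x k m e * H x e n l + H x k m e * G x e n l - G x k n e * H x e m l - H x k n e * G x e m l)"

definition Qx :: "conn \<Rightarrow> pt \<Rightarrow> 4 \<Rightarrow> 4 \<Rightarrow> 4 \<Rightarrow> 4 \<Rightarrow> real" where
  "Qx H x k l m n = (\<Sum>e\<in>UNIV. H x k m e * H x e n l - H x k n e * H x e m l)"

definition Bq :: "(4 \<Rightarrow> 4 \<Rightarrow> 4 \<Rightarrow> 4 \<Rightarrow> real) \<Rightarrow> (4 \<Rightarrow> 4 \<Rightarrow> 4 \<Rightarrow> 4 \<Rightarrow> real) \<Rightarrow> (4 \<Rightarrow> 4 \<Rightarrow> real) \<Rightarrow> real" where
  "Bq X Y gi = (\<Sum>k\<in>UNIV. \<Sum>l\<in>UNIV. \<Sum>m\<in>UNIV. \<Sum>n\<in>UNIV. \<Sum>a\<in>UNIV. \<Sum>b\<in>UNIV.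
        X k l m n * Y l k a b * gi m a * gi n b)"

definition RZ :: "(4 \<Rightarrow> 4 \<Rightarrow> real) \<Rightarrow> (4 \<Rightarrow> 4 \<Rightarrow> real) \<Rightarrow> 4 \<Rightarrow> 4 \<Rightarrow> real" where
  "RZ Y gi m n = (\<Sum>a\<in>UNIV. \<Sum>b\<in>UNIV. Y a b * gi m a * gi n b)"

lemma curv_eps:
  assumes dG: "\<And>a b c i. dif (\<lambda>y. G y a b c) i x" and dH: "\<And>a b c i. dif (\<lambda>y. H y a b c) i x"
  shows "curv (\<lambda>y l m n. G y l m n + \<epsilon> * H y l m n) x k l m n
     = curv G x k l m n + \<epsilon> * Sx G H x k l m n + \<epsilon>\<^sup>2 * Qx H x k l m n"
  unfolding curv_def Sx_def Qx_def
  by (simp add: dG dH algebra_simps power2_eq_square sum.distrib sum_subtractf sum_distrib_left)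

lemma Bq_addL: "Bq (\<lambda>k l m n. X k l m n + Y k l m n) Z gi = Bq X Z gi + Bq Y Z gi"
  unfolding Bq_def by (simp add: distrib_right sum.distrib)
lemma Bq_addR: "Bq Z (\<lambda>k l m n. X k l m n + Y k l m n) gi = Bq Z X gi + Bq Z Y gi"
  unfolding Bq_def by (simp add: distrib_left distrib_right sum.distrib)
lemma Bq_scL: "Bq (\<lambda>k l m n. c * X k l m n) Z gi = c * Bq X Z gi"
  unfolding Bq_def by (simp add: sum_distrib_left mult.assoc)
lemma Bq_scR: "Bq Z (\<lambda>k l m n. c * X k l m n) gi = c * Bq Z X gi"
  unfolding Bq_def by (simp add: sum_distrib_left mult.assoc mult.left_commute)

lemma Bq_expand:
  "Bq (\<lambda>k l m n. R k l m n + e * S k l m n + e\<^sup>2 * Q k l m n) (\<lambda>k l m n. R k l m n + e * S k l m n + e\<^sup>2 * Q k l m n) gi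
   = Bq R R gi + e * (Bq R S gi + Bq S R gi) + e\<^sup>2 * (Bq R Q gi + Bq S S gi + Bq Q R gi)
     + e^3 * (Bq S Q gi + Bq Q S gi) + e^4 * Bq Q Q gi"
  by (simp only: Bq_addL Bq_addR Bq_scL Bq_scR) (simp add: algebra_simps power2_eq_square power3_eq_cube power4_eq_xxxx)

lemma Bq_RZ: "Bq X Y gi = (\<Sum>k\<in>UNIV. \<Sum>l\<in>UNIV. \<Sum>m\<in>UNIV. \<Sum>n\<in>UNIV. X k l m n * RZ (Y l k) gi m n)"
  unfolding Bq_def RZ_def by (simp add: sum_distrib_left mult.assoc)

lemma RZ_gip: "RZ Y (gip f x) m n =
   (let Z = (\<lambda>a. if n = 0 then Y a 3 - f (x$1) (x$2) (x$3) * Y a 0 else if n = 3 then Y a 0 else - Y a n) in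
    if m = 0 then Z 3 - f (x$1) (x$2) (x$3) * Z 0 else if m = 3 then Z 0 else - Z m)"
proof -
  have "\<forall>m n. RZ Y (gip f x) m n =
   (let Z = (\<lambda>a. if n = 0 then Y a 3 - f (x$1) (x$2) (x$3) * Y a 0 else if n = 3 then Y a 0 else - Y a n) in
    if m = 0 then Z 3 - f (x$1) (x$2) (x$3) * Z 0 else if m = 3 then Z 0 else - Z m)"
    unfolding RZ_def by (simp only: all4) (simp add: sum4 gip_def Let_def algebra_simps)
  then show ?thesis by blast
qed


definition Vx :: "(real \<Rightarrow> real \<Rightarrow> real \<Rightarrow> real) \<Rightarrow> (real \<Rightarrow> real) \<Rightarrow> conn \<Rightarrow> 4 \<Rightarrow> pt \<Rightarrow> real" where
  "Vx f k H a =
    (if a = 0 then (\<lambda>y. 4 * (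
        (pd (pd (Fm f) 1) 1 y / 2 - Kf k y * Kf k y / 4) * (H y 1 1 0 + H y 3 1 1)
      + (pd (pd (Fm f) 1) 2 y / 2 + pd (Kf k) 3 y / 2) * (H y 1 2 0 + H y 3 2 1)
      + (pd (pd (Fm f) 1) 2 y / 2 - pd (Kf k) 3 y / 2) * (H y 2 1 0 + H y 3 1 2)
      + (pd (pd (Fm f) 2) 2 y / 2 - Kf k y * Kf k y / 4) * (H y 2 2 0 + H y 3 2 2)))
     else if a = 1 then (\<lambda>y. - 4 * (
        (pd (pd (Fm f) 1) 1 y / 2 - Kf k y * Kf k y / 4) * (H y 1 0 0 + H y 3 0 1)
      + (pd (pd (Fm f) 1) 2 y / 2 - pd (Kf k) 3 y / 2) * (H y 2 0 0 + H y 3 0 2)))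
     else if a = 2 then (\<lambda>y. - 4 * (
        (pd (pd (Fm f) 1) 2 y / 2 + pd (Kf k) 3 y / 2) * (H y 1 0 0 + H y 3 0 1)
      + (pd (pd (Fm f) 2) 2 y / 2 - Kf k y * Kf k y / 4) * (H y 2 0 0 + H y 3 0 2)))
     else (\<lambda>y. 0))"

lemma ricci_r12:
  assumes g: "gen_ppwave_axial U f k G" and x: "x \<in> U" and par: "parallel_lc_ricci U (pp_metric f)"
  shows "pd (pd (pd (Fm f) 1) 2) 2 x = - pd (pd (pd (Fm f) 1) 1) 1 x"
        "pd (pd (pd (Fm f) 1) 2) 1 x = - pd (pd (pd (Fm f) 2) 2) 2 x"
proof -
  note gf = gpa_facts[OF g]
  have c1: "pd (pd (pd (Fm f) 2) 2) 1 x = pd (pd (pd (Fm f) 2) 1) 2 x"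
    by (rule clairaut[OF gf(1) cinf_pd[OF gf(2)] x])
  have c2: "pd (pd (pd (Fm f) 2) 1) 2 x = pd (pd (pd (Fm f) 1) 2) 2 x"
    by (rule pd_local[OF gf(1) x], rule clairaut[OF gf(1) gf(2)])
  have c3: "pd (pd (pd (Fm f) 1) 1) 2 x = pd (pd (pd (Fm f) 1) 2) 1 x"
    by (rule clairaut[OF gf(1) cinf_pd[OF gf(2)] x])
  show "pd (pd (pd (Fm f) 1) 2) 2 x = - pd (pd (pd (Fm f) 1) 1) 1 x"
    using ricci_cond[OF gf(1) x gf(2) par, of 1] c1 c2 by simp
  show "pd (pd (pd (Fm f) 1) 2) 1 x = - pd (pd (pd (Fm f) 2) 2) 2 x"
    using ricci_cond[OF gf(1) x gf(2) par, of 2] c3 by simp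
qed

lemma P1_id:
  assumes g: "gen_ppwave_axial U f k G" and x: "x \<in> U" and par: "parallel_lc_ricci U (pp_metric f)"
    and cH: "\<And>l m n. cinf_on UNIV (\<lambda>x. H x l m n)"
  shows "Bq (Rtab f (Kf k) x) (Sx G H x) (gip f x) + Bq (Sx G H x) (Rtab f (Kf k) x) (gip f x)
       = (\<Sum>a\<in>UNIV. pd (Vx f k H a) a x)"
proof -
  note gf = gpa_facts[OF g]
  have Gx: "G x a b c = Gtab f (Kf k) x a b c" for a b c by (rule G_explicit[OF x gf(5,6)])
  have [simp]: "dif (\<lambda>y. H y a b c) i x" for a b c i by (rule cinf_dif[OF cH]) simp
  have [simp]: "dif (pd (pd (Fm f) i) j) i' x" for i j i' by (rule cinf_dif[OF cinf_pd[OF cinf_pd[OF gf(2)]] x])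
  have [simp]: "dif (Kf k) i x" for i by (rule cinf_dif[OF gf(3) x])
  have [simp]: "dif (pd (Kf k) j) i x" for i j by (rule cinf_dif[OF cinf_pd[OF gf(3)] x])
  note r = ricci_r12[OF g x par]
  show ?thesis
    apply (simp only: Bq_RZ sum4)
    apply (simp add: Rtab_def Let_def RZ_gip)
    apply (simp add: Sx_def sum4 Gx Gtab_def Vx_def r)
    apply (simp add: field_simps)
    done
qed


definition c1on :: "pt set \<Rightarrow> (pt \<Rightarrow> real) \<Rightarrow> bool" where
  "c1on U F \<longleftrightarrow> (\<forall>i. \<forall>y\<in>U. dif F i y) \<and> continuous_on U F \<and> (\<forall>i. continuous_on U (pd F i))"

lemma c1on_add[intro]: "c1on U A \<Longrightarrow> c1on U B \<Longrightarrow> c1on U (\<lambda>y. A y + B y)"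
  unfolding c1on_def
proof (intro conjI allI ballI)
  fix i assume h: "(\<forall>i. \<forall>y\<in>U. dif A i y) \<and> continuous_on U A \<and> (\<forall>i. continuous_on U (pd A i))"
     "(\<forall>i. \<forall>y\<in>U. dif B i y) \<and> continuous_on U B \<and> (\<forall>i. continuous_on U (pd B i))"
  show "continuous_on U (pd (\<lambda>y. A y + B y) i)"
    using h by (subst continuous_on_cong[OF refl, where g = "\<lambda>y. pd A i y + pd B i y"]) (auto intro!: continuous_intros)
qed (auto intro!: continuous_intros)

lemma c1on_diff[intro]: "c1on U A \<Longrightarrow> c1on U B \<Longrightarrow> c1on U (\<lambda>y. A y - B y)"
  unfolding c1on_def
proof (intro conjI allI ballI)
  fix i assume h: "(\<forall>i. \<forall>y\<in>U. dif A i y) \<and> continuous_on U A \<and> (\<forall>i. continuous_on U (pd A i))"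
     "(\<forall>i. \<forall>y\<in>U. dif B i y) \<and> continuous_on U B \<and> (\<forall>i. continuous_on U (pd B i))"
  show "continuous_on U (pd (\<lambda>y. A y - B y) i)"
    using h by (subst continuous_on_cong[OF refl, where g = "\<lambda>y. pd A i y - pd B i y"]) (auto intro!: continuous_intros)
qed (auto intro!: continuous_intros)

lemma c1on_mult[intro]: "c1on U A \<Longrightarrow> c1on U B \<Longrightarrow> c1on U (\<lambda>y. A y * B y)"
  unfolding c1on_def
proof (intro conjI allI ballI)
  fix i assume h: "(\<forall>i. \<forall>y\<in>U. dif A i y) \<and> continuous_on U A \<and> (\<forall>i. continuous_on U (pd A i))"
     "(\<forall>i. \<forall>y\<in>U. dif B i y) \<and> continuous_on U B \<and> (\<forall>i. continuous_on U (pd B i))"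
  show "continuous_on U (pd (\<lambda>y. A y * B y) i)"
    using h by (subst continuous_on_cong[OF refl, where g = "\<lambda>y. pd A i y * B y + A y * pd B i y"]) (auto intro!: continuous_intros)
qed (auto intro!: continuous_intros)

lemma c1on_const[intro]: "c1on U (\<lambda>y. c)"
  unfolding c1on_def by (auto intro!: continuous_intros)

lemma c1on_cmult[intro]: "c1on U A \<Longrightarrow> c1on U (\<lambda>y. c * A y)"
  using c1on_mult[OF c1on_const] by blast
lemma c1on_divc[intro]: "c1on U A \<Longrightarrow> c1on U (\<lambda>y. A y / c)"
  using c1on_mult[OF _ c1on_const, of U A "1/c"] by simp
lemma c1on_minus[intro]: "c1on U A \<Longrightarrow> c1on U (\<lambda>y. - A y)"
  using c1on_cmult[of U A "-1"] by simp

lemma cinf_c1on: "cinf_on U F \<Longrightarrow> c1on U F"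
  unfolding c1on_def using cinf_dif cinf_cont cinf_pd by blast

lemma c1on_subset: "c1on V F \<Longrightarrow> U \<subseteq> V \<Longrightarrow> c1on U F"
  unfolding c1on_def by (meson continuous_on_subset subsetD)

lemma cont_if_const[continuous_intros]:
  "continuous_on U A \<Longrightarrow> continuous_on U B \<Longrightarrow> continuous_on U (\<lambda>x. if P then A x else B x)"
  by (cases P) auto

lemma Bq_cont:
  assumes "\<And>k l m n. continuous_on U (\<lambda>x. X x k l m n)" "\<And>k l m n. continuous_on U (\<lambda>x. Y x k l m n)"
    "\<And>m a. continuous_on U (\<lambda>x. gi x m a)"
  shows "continuous_on U (\<lambda>x. Bq (X x) (Y x) (gi x))"
  unfolding Bq_def by (intro continuous_intros assms)

lemma Bq_zeroL: "Bq (\<lambda>k l m n. 0) Y gi = 0" unfolding Bq_def by simp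
lemma Bq_zeroR: "Bq Y (\<lambda>k l m n. 0) gi = 0" unfolding Bq_def by simp

lemma Bq_RR: "Bq (Rtab f \<kappa> x) (Rtab f \<kappa> x) gi = 0"
  unfolding Bq_def by (simp add: RR_zero)

context
  fixes U :: "pt set" and f :: "real \<Rightarrow> real \<Rightarrow> real \<Rightarrow> real" and k :: "real \<Rightarrow> real" and G H :: conn and K :: "pt set"
  assumes g: "gen_ppwave_axial U f k G"
    and cH: "\<And>l m n. cinf_on UNIV (\<lambda>x. H x l m n)"
    and H0: "\<And>l m n x. x \<notin> K \<Longrightarrow> H x l m n = 0"
    and K: "compact K" "K \<subseteq> U"
begin

lemma gfacts: "open U" "cinf_on U (Fm f)" "cinf_on U (Kf k)" "\<And>l m n. cinf_on U (\<lambda>x. G x l m n)"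
  using gpa_facts[OF g] by auto

lemma openK: "open (- K)" using K(1) compact_imp_closed by blast

lemma pdH0: "x \<notin> K \<Longrightarrow> pd (\<lambda>y. H y a b c) i x = 0"
  using pd_local[OF openK, of x "\<lambda>y. H y a b c" "\<lambda>y. 0" i] H0 by simp

lemma Sx0: "x \<notin> K \<Longrightarrow> Sx G H x = (\<lambda>k l m n. 0)"
  by (intro ext) (simp add: Sx_def pdH0 H0)

lemma Qx0: "x \<notin> K \<Longrightarrow> Qx H x = (\<lambda>k l m n. 0)"
  by (intro ext) (simp add: Qx_def H0)

lemma cont_G: "continuous_on U (\<lambda>x. G x a b c)" "continuous_on U (\<lambda>x. pd (\<lambda>y. G y a b c) i x)"
  using cinf_cont[OF gfacts(4)] cinf_cont[OF cinf_pd[OF gfacts(4)]] by auto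

lemma cont_H: "continuous_on U (\<lambda>x. H x a b c)" "continuous_on U (\<lambda>x. pd (\<lambda>y. H y a b c) i x)"
  using continuous_on_subset[OF cinf_cont[OF cH]] continuous_on_subset[OF cinf_cont[OF cinf_pd[OF cH]]] by auto

lemma cont_curv: "continuous_on U (\<lambda>x. curv G x k' l m n)"
  unfolding curv_def by (intro continuous_intros cont_G)

lemma cont_Sx: "continuous_on U (\<lambda>x. Sx G H x k' l m n)"
  unfolding Sx_def by (intro continuous_intros cont_G cont_H)

lemma cont_Qx: "continuous_on U (\<lambda>x. Qx H x k' l m n)"
  unfolding Qx_def by (intro continuous_intros cont_H)

lemma cont_gip: "continuous_on U (\<lambda>x. gip f x m a)"
proof -
  have "continuous_on U (\<lambda>x. f (x$1) (x$2) (x$3))" using cinf_cont[OF gfacts(2)] unfolding Fm_def .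
  then show ?thesis unfolding gip_def by (intro continuous_intros)
qed


definition Vfull :: "4 \<Rightarrow> pt \<Rightarrow> real" where
  "Vfull a y = (if y \<in> U then Vx f k H a y else 0)"

lemma c1_Vx: "c1on U (Vx f k H a)"
proof -
  have a1[intro]: "c1on U (pd (pd (Fm f) i) j)" for i j by (rule cinf_c1on[OF cinf_pd[OF cinf_pd[OF gfacts(2)]]])
  have a2[intro]: "c1on U (Kf k)" by (rule cinf_c1on[OF gfacts(3)])
  have a3[intro]: "c1on U (pd (Kf k) j)" for j by (rule cinf_c1on[OF cinf_pd[OF gfacts(3)]])
  have a4[intro]: "c1on U (\<lambda>y. H y l b c)" for l b c by (rule c1on_subset[OF cinf_c1on[OF cH]]) simp
  have "\<forall>a. c1on U (Vx f k H a)"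
    by (simp only: all4) (simp add: Vx_def; intro conjI c1on_add c1on_diff c1on_mult c1on_cmult c1on_divc c1on_minus c1on_const a1 a2 a3 a4)
  then show ?thesis by blast
qed

lemma Vx0: "y \<notin> K \<Longrightarrow> Vx f k H a y = 0"
  unfolding Vx_def by (simp add: H0)

lemma Vfull_U: "y \<in> U \<Longrightarrow> pd (Vfull a) i y = pd (Vx f k H a) i y \<and> dif (Vfull a) i y"
proof -
  assume y: "y \<in> U"
  have e: "\<And>z. z \<in> U \<Longrightarrow> Vfull a z = Vx f k H a z" by (simp add: Vfull_def)
  have "dif (Vx f k H a) i y" using c1_Vx y unfolding c1on_def by blast
  then show ?thesis using pd_local[OF gfacts(1) y e] dif_local[OF gfacts(1) y e] by simp
qed

lemma Vfull_K: "y \<notin> K \<Longrightarrow> pd (Vfull a) i y = 0 \<and> dif (Vfull a) i y"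
proof -
  assume y: "y \<notin> K"
  have e: "\<And>z. z \<in> - K \<Longrightarrow> Vfull a z = 0" by (simp add: Vfull_def Vx0)
  have "y \<in> - K" using y by simp
  from pd_local[OF openK this e] dif_local[OF openK this e] show ?thesis by simp
qed

lemma Vfull_hasd: "hasd (Vfull a) a y (pd (Vfull a) a y)"
  by (rule hasd_pd) (metis Vfull_U Vfull_K K(2) subsetD)

lemma Vfull_cont: "continuous_on UNIV (Vfull a)"
proof (rule cont_glue[OF gfacts(1) K(2) K(1)])
  show "continuous_on U (Vfull a)"
    using c1_Vx unfolding c1on_def by (subst continuous_on_cong[OF refl, where g = "Vx f k H a"]) (auto simp: Vfull_def)
  show "\<And>x. x \<notin> K \<Longrightarrow> Vfull a x = 0" by (simp add: Vfull_def Vx0)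
qed

lemma DV_cont: "continuous_on UNIV (pd (Vfull a) a)"
proof (rule cont_glue[OF gfacts(1) K(2) K(1)])
  show "continuous_on U (pd (Vfull a) a)"
    using c1_Vx unfolding c1on_def by (subst continuous_on_cong[OF refl, where g = "pd (Vx f k H a) a"]) (auto simp: Vfull_U)
  show "\<And>x. x \<notin> K \<Longrightarrow> pd (Vfull a) a x = 0" by (simp add: Vfull_K)
qed

lemma DV_int0:
  assumes "K \<subseteq> cbox lo hi"
  shows "integral (cbox (lo - (\<chi> i. 1)) (hi + (\<chi> i. 1))) (pd (Vfull a) a) = 0"
  by (rule int_pd_zero[OF Vfull_hasd Vfull_cont DV_cont _ assms]) (simp add: Vfull_def Vx0)


definition Pg1 :: "pt \<Rightarrow> real" where
  "Pg1 x = (if x \<in> U then Bq (curv G x) (Sx G H x) (gip f x) + Bq (Sx G H x) (curv G x) (gip f x) else 0)"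
definition Pg2 :: "pt \<Rightarrow> real" where
  "Pg2 x = (if x \<in> U then Bq (curv G x) (Qx H x) (gip f x) + Bq (Sx G H x) (Sx G H x) (gip f x)
             + Bq (Qx H x) (curv G x) (gip f x) else 0)"
definition Pg3 :: "pt \<Rightarrow> real" where
  "Pg3 x = (if x \<in> U then Bq (Sx G H x) (Qx H x) (gip f x) + Bq (Qx H x) (Sx G H x) (gip f x) else 0)"
definition Pg4 :: "pt \<Rightarrow> real" where
  "Pg4 x = (if x \<in> U then Bq (Qx H x) (Qx H x) (gip f x) else 0)"

lemma Pg_zero: "x \<notin> K \<Longrightarrow> Pg1 x = 0 \<and> Pg2 x = 0 \<and> Pg3 x = 0 \<and> Pg4 x = 0"
  by (simp add: Pg1_def Pg2_def Pg3_def Pg4_def Sx0 Qx0 Bq_zeroL Bq_zeroR)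

lemma Pg_cont: "continuous_on UNIV Pg1" "continuous_on UNIV Pg2" "continuous_on UNIV Pg3" "continuous_on UNIV Pg4"
proof -
  note bc = Bq_cont[OF cont_curv cont_Sx cont_gip] Bq_cont[OF cont_Sx cont_curv cont_gip]
     Bq_cont[OF cont_curv cont_Qx cont_gip] Bq_cont[OF cont_Qx cont_curv cont_gip]
     Bq_cont[OF cont_Sx cont_Sx cont_gip] Bq_cont[OF cont_Sx cont_Qx cont_gip]
     Bq_cont[OF cont_Qx cont_Sx cont_gip] Bq_cont[OF cont_Qx cont_Qx cont_gip]
  show "continuous_on UNIV Pg1"
    by (rule cont_glue[OF gfacts(1) K(2) K(1)])
       (use bc Pg_zero in \<open>auto simp: Pg1_def intro!: continuous_intros cong: continuous_on_cong\<close>)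
  show "continuous_on UNIV Pg2"
    by (rule cont_glue[OF gfacts(1) K(2) K(1)])
       (use bc Pg_zero in \<open>auto simp: Pg2_def intro!: continuous_intros cong: continuous_on_cong\<close>)
  show "continuous_on UNIV Pg3"
    by (rule cont_glue[OF gfacts(1) K(2) K(1)])
       (use bc Pg_zero in \<open>auto simp: Pg3_def intro!: continuous_intros cong: continuous_on_cong\<close>)
  show "continuous_on UNIV Pg4"
    by (rule cont_glue[OF gfacts(1) K(2) K(1)])
       (use bc Pg_zero in \<open>auto simp: Pg4_def intro!: continuous_intros cong: continuous_on_cong\<close>)
qed

lemma dens:
  assumes x: "x \<in> U"
  shows "ym_density (pp_metric f) (\<lambda>x l m n. G x l m n + \<epsilon> * H x l m n) x
    = \<epsilon> * Pg1 x + \<epsilon>\<^sup>2 * Pg2 x + \<epsilon>^3 * Pg3 x + \<epsilon>^4 * Pg4 x"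
proof -
  have dG: "dif (\<lambda>y. G y a b c) i x" for a b c i by (rule cinf_dif[OF gfacts(4) x])
  have dH: "dif (\<lambda>y. H y a b c) i x" for a b c i by (rule cinf_dif[OF cH]) simp
  have c: "curv (\<lambda>x l m n. G x l m n + \<epsilon> * H x l m n) x
      = (\<lambda>k l m n. curv G x k l m n + \<epsilon> * Sx G H x k l m n + \<epsilon>\<^sup>2 * Qx H x k l m n)"
    by (intro ext curv_eps dG dH)
  have d: "ym_density (pp_metric f) (\<lambda>x l m n. G x l m n + \<epsilon> * H x l m n) x
      = Bq (curv (\<lambda>x l m n. G x l m n + \<epsilon> * H x l m n) x) (curv (\<lambda>x l m n. G x l m n + \<epsilon> * H x l m n) x) (gip f x)"
    unfolding ym_density_def Bq_def ginv_pp vol_pp by simp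
  have cR: "curv G x = Rtab f (Kf k) x" by (intro ext curv_R[OF g x])
  have r: "Bq (curv G x) (curv G x) (gip f x) = 0" unfolding cR by (rule Bq_RR)
  show ?thesis unfolding d c Bq_expand r using x by (simp add: Pg1_def Pg2_def Pg3_def Pg4_def)
qed

lemma Pg1_eq:
  assumes par: "parallel_lc_ricci U (pp_metric f)"
  shows "Pg1 = (\<lambda>x. \<Sum>a\<in>UNIV. pd (Vfull a) a x)"
proof
  fix x
  show "Pg1 x = (\<Sum>a\<in>UNIV. pd (Vfull a) a x)"
  proof (cases "x \<in> U")
    case True
    have cR: "curv G x = Rtab f (Kf k) x" by (intro ext curv_R[OF g True])
    have "Pg1 x = (\<Sum>a\<in>UNIV. pd (Vx f k H a) a x)"
      unfolding Pg1_def cR using P1_id[OF g True par cH] True by simp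
    also have "\<dots> = (\<Sum>a\<in>UNIV. pd (Vfull a) a x)" using Vfull_U[OF True] by simp
    finally show ?thesis .
  next
    case False
    then have "x \<notin> K" using K(2) by auto
    then show ?thesis using False by (simp add: Pg1_def Vfull_K)
  qed
qed

lemma EL_conn_main:
  assumes par: "parallel_lc_ricci U (pp_metric f)"
  shows "((\<lambda>\<epsilon>. ym_action K (pp_metric f) (\<lambda>x l m n. G x l m n + \<epsilon> * H x l m n)) has_real_derivative 0) (at 0)"
proof -
  obtain a :: pt where Ka: "K \<subseteq> cbox (-a) a"
    using bounded_subset_cbox_symmetric[OF compact_imp_bounded[OF K(1)]] by blast
  define B where "B = cbox (-a - (\<chi> i. 1)) (a + (\<chi> i. 1))"
  have KB: "K \<subseteq> B"
  proof
    fix y assume "y \<in> K"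
    then have h: "(-a) $ i \<le> y $ i \<and> y $ i \<le> a $ i" for i using Ka by (auto simp: mem_box_cart)
    show "y \<in> B" unfolding B_def mem_box_cart
    proof (intro allI)
      fix i from h[of i] show "(- a - (\<chi> i. 1)) $ i \<le> y $ i \<and> y $ i \<le> (a + (\<chi> i. 1)) $ i" by simp
    qed
  qed
  have hi: "(P has_integral integral B P) B" if "continuous_on UNIV P" for P :: "pt \<Rightarrow> real"
    unfolding B_def by (rule integrable_integral, rule integrable_continuous, rule continuous_on_subset[OF that]) simp
  define I1 where "I1 = integral B Pg1"
  define I2 where "I2 = integral B Pg2"
  define I3 where "I3 = integral B Pg3"
  define I4 where "I4 = integral B Pg4"
  have act: "ym_action K (pp_metric f) (\<lambda>x l m n. G x l m n + \<epsilon> * H x l m n)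
      = \<epsilon> * I1 + \<epsilon>\<^sup>2 * I2 + \<epsilon>^3 * I3 + \<epsilon>^4 * I4" for \<epsilon>
  proof -
    let ?P = "\<lambda>x. \<epsilon> * Pg1 x + \<epsilon>\<^sup>2 * Pg2 x + \<epsilon>^3 * Pg3 x + \<epsilon>^4 * Pg4 x"
    have "ym_action K (pp_metric f) (\<lambda>x l m n. G x l m n + \<epsilon> * H x l m n) = integral K ?P"
      unfolding ym_action_def by (rule integral_cong) (use K(2) dens in auto)
    also have "\<dots> = integral UNIV ?P" by (rule int_indep[of K]) (auto simp: Pg_zero)
    also have "\<dots> = integral B ?P" by (rule int_indep[of K, symmetric]) (use KB in \<open>auto simp: Pg_zero\<close>)
    also have "\<dots> = \<epsilon> * I1 + \<epsilon>\<^sup>2 * I2 + \<epsilon>^3 * I3 + \<epsilon>^4 * I4"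
      unfolding I1_def I2_def I3_def I4_def
      by (intro integral_unique has_integral_add has_integral_mult_right hi Pg_cont)
    finally show ?thesis .
  qed
  have I10: "I1 = 0"
  proof -
    have "I1 = integral B (\<lambda>x. \<Sum>a\<in>UNIV. pd (Vfull a) a x)" unfolding I1_def Pg1_eq[OF par] ..
    also have "\<dots> = (\<Sum>a\<in>UNIV. integral B (pd (Vfull a) a))"
      by (rule integral_sum) (auto intro: has_integral_integrable[OF hi[OF DV_cont]])
    also have "\<dots> = 0" unfolding B_def using DV_int0[OF Ka] by simp
    finally show ?thesis .
  qed
  have "((\<lambda>\<epsilon>. \<epsilon> * I1 + \<epsilon>\<^sup>2 * I2 + \<epsilon>^3 * I3 + \<epsilon>^4 * I4) has_real_derivative
      I1) (at 0)"
    by (auto intro!: derivative_eq_intros)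
  then show ?thesis unfolding act I10 by simp
qed

end


theorem theorem1:
  fixes U :: "(real^4) set" and f :: "real \<Rightarrow> real \<Rightarrow> real \<Rightarrow> real"
    and k :: "real \<Rightarrow> real" and G :: "real^4 \<Rightarrow> 4 \<Rightarrow> 4 \<Rightarrow> 4 \<Rightarrow> real"
  assumes "connected U"
    and "gen_ppwave_axial U f k G"
    and "parallel_lc_ricci U (pp_metric f)"
  shows "EL_metric U (pp_metric f) G \<and> EL_conn U (pp_metric f) G"
proof
  show "EL_metric U (pp_metric f) G" by (rule EL_metric_pp[OF assms(2)])
  show "EL_conn U (pp_metric f) G"
    unfolding EL_conn_def
  proof (intro allI impI)
    fix H :: conn and K :: "pt set"
    assume hK: "compact K \<and> K \<subseteq> U \<and>
        (\<forall>l m n. cinf_on UNIV (\<lambda>x. H x l m n) \<and> (\<forall>x. x \<notin> K \<longrightarrow> H x l m n = 0))"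
    have cH: "\<And>l m n. cinf_on UNIV (\<lambda>x. H x l m n)" using hK by blast
    have H0: "\<And>l m n x. x \<notin> K \<Longrightarrow> H x l m n = 0" using hK by blast
    show "((\<lambda>\<epsilon>. ym_action K (pp_metric f) (\<lambda>x l m n. G x l m n + \<epsilon> * H x l m n)) has_real_derivative 0) (at 0)"
      by (rule EL_conn_main[OF assms(2) cH H0 _ _ assms(3)]) (use hK in auto)
  qed
qed

end
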